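(* Let $f_1(z)=e^z+z$, $f_2(z)=e^z+1$ and $F(z)=e^z$. Then $$\mathrm{tr.deg}_{\mathbb{C}}\,\mathbb{C}\big(f_1,f_2,F(f_1),F(f_2)\big)=3 .$$
   Context: $F(f_i)=F\circ f_i$; $\mathrm{tr.deg}_{\mathbb{C}}\,\mathbb{C}(g_1,\dots,g_k)$ is the transcendence degree over $\mathbb{C}$ of the field generated over $\mathbb{C}$ by the entire functions $g_1,\dots,g_k$. *)

theory Defs
  imports "HOL-Analysis.Analysis"
begin

text \<open>Polynomials in the variables x_0,...,x_(n-1) with complex coefficients,
  represented as finitely supported coefficient functions on exponent vectors.\<close>
definition is_mpoly :: "nat \<Rightarrow> ((nat \<Rightarrow> nat) \<Rightarrow> complex) \<Rightarrow> bool" where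
  "is_mpoly n P \<longleftrightarrow> finite {a. P a \<noteq> 0} \<and> (\<forall>a. P a \<noteq> 0 \<longrightarrow> (\<forall>i\<ge>n. a i = 0))"

definition mpoly_eval :: "nat \<Rightarrow> ((nat \<Rightarrow> nat) \<Rightarrow> complex) \<Rightarrow> (nat \<Rightarrow> complex) \<Rightarrow> complex" where
  "mpoly_eval n P x = (\<Sum>a\<in>{a. P a \<noteq> 0}. P a * (\<Prod>i<n. x i ^ a i))"

text \<open>The field C(g_0,...,g_(n-1)) generated over C by functions g_i, realised as
  the set of quotients P(g)/Q(g) with Q(g) not identically zero (pointwise, with
  the convention x/0 = 0 at the isolated poles).\<close>
definition gen_field :: "nat \<Rightarrow> (nat \<Rightarrow> complex \<Rightarrow> complex) \<Rightarrow> (complex \<Rightarrow> complex) set" where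
  "gen_field n g = {(\<lambda>z. mpoly_eval n P (\<lambda>i. g i z) / mpoly_eval n Q (\<lambda>i. g i z)) | P Q.
      is_mpoly n P \<and> is_mpoly n Q \<and> (\<exists>z. mpoly_eval n Q (\<lambda>i. g i z) \<noteq> 0)}"

text \<open>A meromorphic function vanishes identically iff
  it is nonzero only on a countable set (poles/representative ambiguity are countable).\<close>
definition alg_indep :: "nat \<Rightarrow> (nat \<Rightarrow> complex \<Rightarrow> complex) \<Rightarrow> bool" where
  "alg_indep m h \<longleftrightarrow> (\<forall>P. is_mpoly m P \<and> (\<exists>a. P a \<noteq> 0) \<longrightarrow>
      uncountable {z. mpoly_eval m P (\<lambda>i. h i z) \<noteq> 0})"

definition trdeg :: "nat \<Rightarrow> (nat \<Rightarrow> complex \<Rightarrow> complex) \<Rightarrow> nat" where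
  "trdeg n g = Sup {m. \<exists>h. (\<forall>i<m. h i \<in> gen_field n g) \<and> alg_indep m h}"

end

theory Submission imports Defs "HOL-Library.Function_Algebras" "HOL-Complex_Analysis.Complex_Analysis"
begin

definition fscale :: "complex \<Rightarrow> (complex \<Rightarrow> complex) \<Rightarrow> (complex \<Rightarrow> complex)" where
  "fscale c f = (\<lambda>z. c * f z)"

interpretation FV: vector_space fscale
  by unfold_locales (auto simp: fscale_def fun_eq_iff algebra_simps)

definition mono3 :: "nat \<Rightarrow> nat \<Rightarrow> nat \<Rightarrow> complex \<Rightarrow> complex" where
  "mono3 i j k = (\<lambda>z. z^i * exp z ^ j * exp (exp z) ^ k)"

definition Sd :: "nat \<Rightarrow> (complex \<Rightarrow> complex) set" where
  "Sd d = FV.span {mono3 i j k | i j k. i \<le> d \<and> j \<le> d \<and> k \<le> d}"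

lemma mono3_mult: "mono3 i j k * mono3 i' j' k' = mono3 (i+i') (j+j') (k+k')"
  by (auto simp: mono3_def fun_eq_iff power_add)

lemma Sd_mono: "d \<le> d' \<Longrightarrow> Sd d \<subseteq> Sd d'"
  unfolding Sd_def by (rule FV.span_mono) (auto 0 4)

lemma Sd_mult_mono:
  assumes "g \<in> Sd d'" "i \<le> d" "j \<le> d" "k \<le> d"
  shows "mono3 i j k * g \<in> Sd (d+d')"
  using assms(1) unfolding Sd_def
proof (induction rule: FV.span_induct_alt)
  case base
  then show ?case using FV.span_zero by (auto simp: zero_fun_def)
next
  case (step c x y)
  then obtain i' j' k' where x: "x = mono3 i' j' k'" "i' \<le> d'" "j' \<le> d'" "k' \<le> d'" by auto
  have eq: "mono3 i j k * (fscale c x + y) = fscale c (mono3 i j k * x) + mono3 i j k * y"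
    by (auto simp: fscale_def fun_eq_iff algebra_simps)
  have A: "mono3 i j k * x \<in> FV.span {mono3 i j k | i j k. i \<le> d+d' \<and> j \<le> d+d' \<and> k \<le> d+d'}"
    unfolding x(1) mono3_mult using x assms by (intro FV.span_base CollectI exI[of _ "i+i'"] exI[of _ "j+j'"] exI[of _ "k+k'"]) auto
  show ?case unfolding eq by (rule FV.span_add[OF FV.span_scale[OF A] step(2)])
qed

lemma Sd_mult:
  assumes "f \<in> Sd d" "g \<in> Sd d'"
  shows "f * g \<in> Sd (d+d')"
  using assms(1) unfolding Sd_def
proof (induction rule: FV.span_induct_alt)
  case base
  then show ?case using FV.span_zero by (auto simp: zero_fun_def)
next
  case (step c x y)
  then obtain i j k where x: "x = mono3 i j k" "i \<le> d" "j \<le> d" "k \<le> d" by auto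
  have eq: "(fscale c x + y) * g = fscale c (x * g) + y * g"
    by (auto simp: fscale_def fun_eq_iff algebra_simps)
  have A: "x * g \<in> Sd (d+d')" using Sd_mult_mono[OF assms(2)] x by auto
  show ?case unfolding eq using A step(2) unfolding Sd_def by (rule FV.span_add[OF FV.span_scale])
qed

lemma Sd_add: "f \<in> Sd d \<Longrightarrow> g \<in> Sd d \<Longrightarrow> f + g \<in> Sd d"
  unfolding Sd_def by (rule FV.span_add)

lemma Sd_scale: "f \<in> Sd d \<Longrightarrow> (\<lambda>z. c * f z) \<in> Sd d"
  unfolding Sd_def using FV.span_scale[of f _ c] by (simp add: fscale_def)

lemma Sd_const: "(\<lambda>z. c) \<in> Sd d"
proof -
  have "mono3 0 0 0 \<in> Sd d" unfolding Sd_def by (rule FV.span_base) auto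
  from Sd_scale[OF this, of c] show ?thesis by (simp add: mono3_def)
qed

lemma Sd_sum: "finite A \<Longrightarrow> (\<And>a. a \<in> A \<Longrightarrow> f a \<in> Sd d) \<Longrightarrow> (\<lambda>z. \<Sum>a\<in>A. f a z) \<in> Sd d"
proof (induction A rule: finite_induct)
  case empty
  then show ?case using Sd_const[of 0 d] by simp
next
  case (insert x F)
  then have "f x + (\<lambda>z. \<Sum>a\<in>F. f a z) \<in> Sd d" by (intro Sd_add) auto
  then show ?case using insert by (simp add: plus_fun_def)
qed

lemma Sd_prod: "finite A \<Longrightarrow> (\<And>a. a \<in> A \<Longrightarrow> f a \<in> Sd (e a)) \<Longrightarrow> (\<lambda>z. \<Prod>a\<in>A. f a z) \<in> Sd (\<Sum>a\<in>A. e a)"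
proof (induction A rule: finite_induct)
  case empty
  then show ?case using Sd_const[of 1 0] by simp
next
  case (insert x F)
  then have "f x * (\<lambda>z. \<Prod>a\<in>F. f a z) \<in> Sd (e x + (\<Sum>a\<in>F. e a))" by (intro Sd_mult) auto
  then show ?case using insert by (simp add: times_fun_def)
qed

lemma Sd_power: "f \<in> Sd d \<Longrightarrow> (\<lambda>z. f z ^ n) \<in> Sd (n*d)"
  using Sd_prod[of "{..<n}" "\<lambda>_. f" "\<lambda>_. d"] by simp


lemma lim_case1:
  fixes k j l k' j' l' :: nat
  assumes "l' < l"
  shows "((\<lambda>t::real. (t^k' * exp t^j' * exp (exp t)^l') / (t^k * exp t^j * exp (exp t)^l)) \<longlongrightarrow> 0) at_top"
proof (rule Lim_null_comparison)
  have lim: "((\<lambda>t. exp t ^ (k'+j') / exp (exp t)) \<longlongrightarrow> (0::real)) at_top"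
    by (rule filterlim_compose[OF tendsto_power_div_exp_0 exp_at_top])
  then show "((\<lambda>t. exp t ^ (k'+j') / exp (exp t)) \<longlongrightarrow> (0::real)) at_top" .
  show "\<forall>\<^sub>F t in at_top. norm ((t^k' * exp t^j' * exp (exp t)^l') / (t^k * exp t^j * exp (exp t)^l)) \<le> exp t ^ (k'+j') / exp (exp t)"
    using eventually_ge_at_top[of "1::real"]
  proof eventually_elim
    case (elim t)
    have E2: "exp (exp t) ^ l \<ge> exp (exp t)^l' * exp (exp t)"
    proof -
      have "exp (exp t)^l' * exp (exp t) = exp (exp t) ^ (Suc l')" by simp
      also have "\<dots> \<le> exp (exp t) ^ l" by (rule power_increasing) (use assms in auto)
      finally show ?thesis .
    qed
    have d1: "t^k \<ge> 1" "exp t ^ j \<ge> 1" using elim by auto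
    have "t^k * exp t^j * exp (exp t)^l \<ge> 1 * 1 * (exp (exp t)^l' * exp (exp t))"
      using E2 d1 by (intro mult_mono) auto
    then have den: "t^k * exp t^j * exp (exp t)^l \<ge> exp (exp t)^l' * exp (exp t)" by simp
    have num: "t^k' \<le> exp t ^ k'"
      using elim by (intro power_mono) (auto simp: less_imp_le[OF exp_gt_self] )
    have "norm ((t^k' * exp t^j' * exp (exp t)^l') / (t^k * exp t^j * exp (exp t)^l))
       = (t^k' * exp t^j' * exp (exp t)^l') / (t^k * exp t^j * exp (exp t)^l)"
      using elim by simp
    also have "\<dots> \<le> (t^k' * exp t^j' * exp (exp t)^l') / (exp (exp t)^l' * exp (exp t))"
      using den elim by (intro divide_left_mono) auto
    also have "\<dots> = t^k' * exp t^j' / exp (exp t)" by (simp add: field_simps)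
    also have "\<dots> \<le> exp t ^ k' * exp t ^ j' / exp (exp t)"
      using num by (intro divide_right_mono mult_right_mono) auto
    also have "\<dots> = exp t ^ (k'+j') / exp (exp t)" by (simp add: power_add)
    finally show ?case .
  qed
qed

lemma lim_case2:
  fixes k j l k' j' :: nat
  assumes "j' < j"
  shows "((\<lambda>t::real. (t^k' * exp t^j' * exp (exp t)^l) / (t^k * exp t^j * exp (exp t)^l)) \<longlongrightarrow> 0) at_top"
proof (rule Lim_null_comparison)
  show "((\<lambda>t. t ^ k' / exp t) \<longlongrightarrow> (0::real)) at_top" by (rule tendsto_power_div_exp_0)
  show "\<forall>\<^sub>F t in at_top. norm ((t^k' * exp t^j' * exp (exp t)^l) / (t^k * exp t^j * exp (exp t)^l)) \<le> t ^ k' / exp t"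
    using eventually_ge_at_top[of "1::real"]
  proof eventually_elim
    case (elim t)
    have E1: "exp t ^ j \<ge> exp t^j' * exp t"
    proof -
      have "exp t^j' * exp t = exp t ^ (Suc j')" by simp
      also have "\<dots> \<le> exp t ^ j" by (rule power_increasing) (use assms elim in auto)
      finally show ?thesis .
    qed
    have d1: "t^k \<ge> 1" using elim by auto
    have "t^k * exp t^j \<ge> 1 * (exp t^j' * exp t)"
      using E1 d1 by (intro mult_mono) auto
    then have den: "t^k * exp t^j \<ge> exp t^j' * exp t" by simp
    have "norm ((t^k' * exp t^j' * exp (exp t)^l) / (t^k * exp t^j * exp (exp t)^l))
       = (t^k' * exp t^j') / (t^k * exp t^j)"
      using elim by simp
    also have "\<dots> \<le> (t^k' * exp t^j') / (exp t^j' * exp t)"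
      using den elim by (intro divide_left_mono) auto
    also have "\<dots> = t^k' / exp t" by (simp add: field_simps)
    finally show ?case .
  qed
qed

lemma lim_case3:
  fixes k j l k' :: nat
  assumes "k' < k"
  shows "((\<lambda>t::real. (t^k' * exp t^j * exp (exp t)^l) / (t^k * exp t^j * exp (exp t)^l)) \<longlongrightarrow> 0) at_top"
proof (rule Lim_null_comparison)
  show "((\<lambda>t. inverse t) \<longlongrightarrow> (0::real)) at_top" by (rule tendsto_inverse_0_at_top[OF filterlim_ident])
  show "\<forall>\<^sub>F t in at_top. norm ((t^k' * exp t^j * exp (exp t)^l) / (t^k * exp t^j * exp (exp t)^l)) \<le> inverse t"
    using eventually_ge_at_top[of "1::real"]
  proof eventually_elim
    case (elim t)
    have den: "t ^ k \<ge> t^k' * t"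
    proof -
      have "t^k' * t = t ^ (Suc k')" by simp
      also have "\<dots> \<le> t ^ k" by (rule power_increasing) (use assms elim in auto)
      finally show ?thesis .
    qed
    have "norm ((t^k' * exp t^j * exp (exp t)^l) / (t^k * exp t^j * exp (exp t)^l))
       = t^k' / t^k"
      using elim by simp
    also have "\<dots> \<le> t^k' / (t^k' * t)"
      using den elim by (intro divide_left_mono) auto
    also have "\<dots> = inverse t" using elim by (simp add: field_simps)
    finally show ?case .
  qed
qed

lemma lower_key:
  assumes mp: "is_mpoly 3 P" and nz: "\<exists>a. P a \<noteq> 0"
  shows "\<exists>T. \<forall>t\<ge>T. mpoly_eval 3 P (\<lambda>i. [complex_of_real t, exp (of_real t), exp (exp (of_real t))] ! i) \<noteq> 0"
proof -
  define S where "S = {a. P a \<noteq> 0}"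
  have finS: "finite S" and neS: "S \<noteq> {}" using mp nz by (auto simp: S_def is_mpoly_def)
  have zero3: "a i = 0" if "a \<in> S" "i \<ge> 3" for a i using mp that by (auto simp: S_def is_mpoly_def)
  define L where "L = Max ((\<lambda>a. a 2) ` S)"
  define S1 where "S1 = {a\<in>S. a 2 = L}"
  have "L \<in> (\<lambda>a. a 2) ` S" unfolding L_def using finS neS by (intro Max_in) auto
  then have finS1: "finite S1" and neS1: "S1 \<noteq> {}"
    using finS by (auto simp: S1_def)
  define J where "J = Max ((\<lambda>a. a 1) ` S1)"
  define S2 where "S2 = {a\<in>S1. a 1 = J}"
  have "J \<in> (\<lambda>a. a 1) ` S1" unfolding J_def using finS1 neS1 by (intro Max_in) auto
  then have finS2: "finite S2" and neS2: "S2 \<noteq> {}"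
    using finS1 by (auto simp: S2_def)
  define K where "K = Max ((\<lambda>a. a 0) ` S2)"
  have "K \<in> (\<lambda>a. a 0) ` S2" unfolding K_def using finS2 neS2 by (intro Max_in) auto
  then obtain as where as: "as \<in> S2" "as 0 = K" by auto
  have asS: "as \<in> S" and as2: "as 2 = L" and as1: "as 1 = J" using as by (auto simp: S2_def S1_def)
  have lex: "a 2 < L \<or> (a 2 = L \<and> a 1 < J) \<or> (a 2 = L \<and> a 1 = J \<and> a 0 < K)"
    if a: "a \<in> S" "a \<noteq> as" for a
  proof -
    have "a 2 \<le> L" using a finS by (auto simp: L_def)
    moreover have "a 1 \<le> J" if "a 2 = L" using a that finS1 by (auto simp: J_def S1_def)
    moreover have "a 0 \<le> K" if "a 2 = L" "a 1 = J" using a that finS2 by (auto simp: K_def S1_def S2_def)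
    moreover have "\<not> (a 2 = L \<and> a 1 = J \<and> a 0 = K)"
    proof
      assume h: "a 2 = L \<and> a 1 = J \<and> a 0 = K"
      have "a i = as i" for i
      proof (cases "i \<ge> 3")
        case True then show ?thesis using zero3[OF a(1) True] zero3[OF asS True] by simp
      next
        case False then have "i = 0 \<or> i = 1 \<or> i = 2" by auto
        then show ?thesis using h as as1 as2 by auto
      qed
      then show False using a by auto
    qed
    ultimately show ?thesis by linarith
  qed
  define r where "r a t = t^(a 0) * exp t^(a 1) * exp (exp t)^(a 2)" for a :: "nat \<Rightarrow> nat" and t :: real
  have rpos: "r a t > 0" if "t > 0" for a t using that by (simp add: r_def)
  have eval: "mpoly_eval 3 P (\<lambda>i. [complex_of_real t, exp (of_real t), exp (exp (of_real t))] ! i)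
      = (\<Sum>a\<in>S. P a * of_real (r a t))" for t
    unfolding mpoly_eval_def S_def[symmetric]
    by (intro sum.cong refl) (simp add: r_def eval_nat_numeral lessThan_Suc exp_of_real)
  have lim1: "((\<lambda>t. P a * of_real (r a t / r as t)) \<longlongrightarrow> (if a = as then P a else 0)) at_top"
    if "a \<in> S" for a
  proof (cases "a = as")
    case True
    have "\<forall>\<^sub>F t in at_top. P a = P a * of_real (r a t / r as t)"
      using eventually_gt_at_top[of "0::real"] proof eventually_elim
      case (elim t) then show ?case using True rpos[OF elim, of as] by simp
    qed
    then show ?thesis using True by (intro Lim_transform_eventually[OF tendsto_const]) auto
  next
    case False
    have "((\<lambda>t. r a t / r as t) \<longlongrightarrow> 0) at_top"
      using lex[OF that False]
    proof (elim disjE conjE)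
      assume "a 2 < L" then show ?thesis unfolding r_def using lim_case1 as2 by simp
    next
      assume "a 2 = L" "a 1 < J" then show ?thesis unfolding r_def using lim_case2 as2 as1 by simp
    next
      assume "a 2 = L" "a 1 = J" "a 0 < K" then show ?thesis unfolding r_def using lim_case3 as2 as1 as by simp
    qed
    then have "((\<lambda>t. P a * of_real (r a t / r as t)) \<longlongrightarrow> P a * of_real 0) at_top"
      by (intro tendsto_mult tendsto_const tendsto_of_real)
    then show ?thesis using False by simp
  qed
  have "((\<lambda>t. \<Sum>a\<in>S. P a * of_real (r a t / r as t)) \<longlongrightarrow> (\<Sum>a\<in>S. if a = as then P a else 0)) at_top"
    by (intro tendsto_sum lim1)
  also have "(\<Sum>a\<in>S. if a = as then P a else 0) = P as" using finS asS by simp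
  finally have lim: "((\<lambda>t. \<Sum>a\<in>S. P a * of_real (r a t / r as t)) \<longlongrightarrow> P as) at_top" .
  have "P as \<noteq> 0" using asS by (simp add: S_def)
  from tendsto_imp_eventually_ne[OF lim this]
  have "\<forall>\<^sub>F t in at_top. (\<Sum>a\<in>S. P a * of_real (r a t / r as t)) \<noteq> 0" .
  then have "\<forall>\<^sub>F t in at_top. mpoly_eval 3 P (\<lambda>i. [complex_of_real t, exp (of_real t), exp (exp (of_real t))] ! i) \<noteq> 0"
    using eventually_gt_at_top[of "0::real"]
  proof eventually_elim
    case (elim t)
    have "(\<Sum>a\<in>S. P a * of_real (r a t)) = of_real (r as t) * (\<Sum>a\<in>S. P a * of_real (r a t / r as t))"
      unfolding sum_distrib_left using rpos[OF elim(2), of as]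
      by (intro sum.cong refl) (simp add: field_simps)
    then show ?case unfolding eval using elim rpos[OF elim(2), of as] by simp
  qed
  then show ?thesis by (simp add: eventually_at_top_linorder)
qed


lemma fun_sum_apply: "(\<Sum>v\<in>T. f v) z = (\<Sum>v\<in>T. f v z)" for f :: "'a \<Rightarrow> 'b \<Rightarrow> 'c::comm_monoid_add"
proof (cases "finite T")
  case True then show ?thesis by (induction T rule: finite_induct) auto
qed simp

lemma dep_lemma:
  fixes \<Phi> :: "'a \<Rightarrow> complex \<Rightarrow> complex"
  assumes "finite A" "finite B" "card B < card A" "\<Phi> ` A \<subseteq> FV.span B"
  shows "\<exists>c. (\<exists>a\<in>A. c a \<noteq> 0) \<and> (\<forall>z. (\<Sum>a\<in>A. c a * \<Phi> a z) = 0)"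
proof (cases "inj_on \<Phi> A")
  case False
  then obtain a1 a2 where a: "a1 \<in> A" "a2 \<in> A" "a1 \<noteq> a2" "\<Phi> a1 = \<Phi> a2"
    by (auto simp: inj_on_def)
  define c where "c a = (if a = a1 then 1 else if a = a2 then -1 else (0::complex))" for a
  have "(\<Sum>a\<in>A. c a * \<Phi> a z) = 0" for z
  proof -
    have "(\<Sum>a\<in>A. c a * \<Phi> a z) = (\<Sum>a\<in>A. (if a = a1 then \<Phi> a z else 0) - (if a = a2 then \<Phi> a z else 0))"
      by (intro sum.cong refl) (use a in \<open>auto simp: c_def\<close>)
    also have "\<dots> = 0" using a assms(1) by (simp add: sum_subtractf)
    finally show ?thesis .
  qed
  moreover have "c a1 \<noteq> 0" by (simp add: c_def)
  ultimately show ?thesis using a by blast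
next
  case True
  have "\<not> FV.independent (\<Phi> ` A)"
  proof
    assume "FV.independent (\<Phi> ` A)"
    from FV.independent_span_bound[OF assms(2) this assms(4)]
    have "card (\<Phi> ` A) \<le> card B" by simp
    then show False using True assms(3) by (simp add: card_image)
  qed
  then obtain t u where tu: "finite t" "t \<subseteq> \<Phi> ` A" "(\<Sum>v\<in>t. fscale (u v) v) = 0" "\<exists>v\<in>t. u v \<noteq> 0"
    unfolding FV.dependent_explicit by blast
  define c where "c a = (if \<Phi> a \<in> t then u (\<Phi> a) else 0)" for a
  have "(\<Sum>a\<in>A. c a * \<Phi> a z) = 0" for z
  proof -
    have "(\<Sum>a\<in>A. c a * \<Phi> a z) = (\<Sum>a\<in>{a\<in>A. \<Phi> a \<in> t}. u (\<Phi> a) * \<Phi> a z)"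
      using assms(1) by (auto simp: c_def sum.inter_filter intro!: sum.cong)
    also have "\<dots> = (\<Sum>v\<in>\<Phi> ` {a\<in>A. \<Phi> a \<in> t}. u v * v z)"
      using True by (subst sum.reindex) (auto intro: inj_on_subset)
    also have "\<Phi> ` {a\<in>A. \<Phi> a \<in> t} = t" using tu(2) by auto
    also have "(\<Sum>v\<in>t. u v * v z) = (\<Sum>v\<in>t. fscale (u v) v) z"
      by (simp add: fun_sum_apply fscale_def)
    also have "\<dots> = 0" using tu(3) by simp
    finally show ?thesis .
  qed
  moreover obtain v where "v \<in> t" "u v \<noteq> 0" using tu by blast
  then obtain a where "a \<in> A" "\<Phi> a = v" "c a \<noteq> 0" using tu(2) by (auto simp: c_def)
  ultimately show ?thesis by blast
qed

lemma mpoly_Sd: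
  assumes "is_mpoly n P" "\<And>i. i < n \<Longrightarrow> G i \<in> Sd 1"
  shows "(\<lambda>z. mpoly_eval n P (\<lambda>i. G i z)) \<in> Sd (\<Sum>a\<in>{a. P a \<noteq> 0}. \<Sum>i<n. a i)"
  unfolding mpoly_eval_def
proof (rule Sd_sum)
  show fin: "finite {a. P a \<noteq> 0}" using assms(1) by (simp add: is_mpoly_def)
  fix a assume a: "a \<in> {a. P a \<noteq> 0}"
  have "(\<lambda>z. \<Prod>i<n. G i z ^ a i) \<in> Sd (\<Sum>i<n. a i * 1)"
    by (intro Sd_prod Sd_power assms(2)) auto
  also have "\<dots> \<subseteq> Sd (\<Sum>a\<in>{a. P a \<noteq> 0}. \<Sum>i<n. a i)"
    using fin a by (intro Sd_mono member_le_sum) auto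
  finally show "(\<lambda>z. P a * (\<Prod>i<n. G i z ^ a i)) \<in> Sd (\<Sum>a\<in>{a. P a \<noteq> 0}. \<Sum>i<n. a i)"
    by (rule Sd_scale)
qed

lemma mpoly_holo:
  assumes "\<And>i. i < n \<Longrightarrow> G i holomorphic_on UNIV"
  shows "(\<lambda>z. mpoly_eval n P (\<lambda>i. G i z)) holomorphic_on UNIV"
  unfolding mpoly_eval_def
  by (intro holomorphic_on_sum holomorphic_on_mult holomorphic_on_const holomorphic_on_prod
      holomorphic_on_power assms) auto

lemma countable_zeros:
  assumes "f holomorphic_on UNIV" "f z0 \<noteq> 0"
  shows "countable {z. f z = 0}"
proof (cases "f constant_on UNIV")
  case True
  then have "{z. f z = 0} = {}" using assms(2) by (auto simp: constant_on_def)
  then show ?thesis by simp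
next
  case False
  from holomorphic_countable_zeros[OF assms(1) _ _ _ False] show ?thesis by (simp add: connected_UNIV)
qed

definition GG :: "nat \<Rightarrow> complex \<Rightarrow> complex" where
  "GG = (\<lambda>i. [(\<lambda>z. exp z + z), (\<lambda>z. exp z + 1), exp \<circ> (\<lambda>z. exp z + z), exp \<circ> (\<lambda>z. exp z + 1)] ! i)"

lemma less4: "i < (4::nat) \<Longrightarrow> i = 0 \<or> i = 1 \<or> i = 2 \<or> i = 3" by auto

lemma GG_Sd: "i < 4 \<Longrightarrow> GG i \<in> Sd 1"
proof (drule less4, elim disjE)
  assume "i = 0"
  have "GG 0 = mono3 0 1 0 + mono3 1 0 0" by (auto simp: GG_def mono3_def fun_eq_iff)
  moreover have "mono3 0 1 0 \<in> Sd 1" "mono3 1 0 0 \<in> Sd 1" unfolding Sd_def by (auto intro!: FV.span_base)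
  ultimately show "GG i \<in> Sd 1" using \<open>i = 0\<close> by (simp add: Sd_add)
next
  assume "i = 1"
  have "GG 1 = mono3 0 1 0 + (\<lambda>z. 1)" by (auto simp: GG_def mono3_def fun_eq_iff)
  moreover have "mono3 0 1 0 \<in> Sd 1" unfolding Sd_def by (auto intro!: FV.span_base)
  ultimately show "GG i \<in> Sd 1" using \<open>i = 1\<close> by (simp add: Sd_add Sd_const)
next
  assume "i = 2"
  have "GG 2 = mono3 0 1 1" by (auto simp: GG_def mono3_def fun_eq_iff exp_add)
  moreover have "mono3 0 1 1 \<in> Sd 1" unfolding Sd_def by (auto intro!: FV.span_base)
  ultimately show "GG i \<in> Sd 1" using \<open>i = 2\<close> by simp
next
  assume "i = 3"
  have "GG 3 = (\<lambda>z. exp 1 * mono3 0 0 1 z)" by (auto simp: GG_def mono3_def fun_eq_iff exp_add)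
  moreover have "mono3 0 0 1 \<in> Sd 1" unfolding Sd_def by (auto intro!: FV.span_base)
  ultimately show "GG i \<in> Sd 1" using \<open>i = 3\<close> by (simp add: Sd_scale)
qed

lemma GG_holo: "i < 4 \<Longrightarrow> GG i holomorphic_on UNIV"
  by (drule less4, elim disjE) (auto simp: GG_def o_def intro!: holomorphic_intros)


lemma Sd_mult': "f \<in> Sd d \<Longrightarrow> g \<in> Sd d' \<Longrightarrow> (\<lambda>z. f z * g z) \<in> Sd (d+d')"
  using Sd_mult[of f d g d'] by (simp add: times_fun_def)

definition degP :: "((nat \<Rightarrow> nat) \<Rightarrow> complex) \<Rightarrow> nat" where
  "degP P = (\<Sum>a\<in>{a. P a \<noteq> 0}. \<Sum>i<4. a i)"

lemma card_A_ge:
  fixes n :: nat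
  defines "A \<equiv> {a::nat\<Rightarrow>nat. \<forall>x. (x \<in> {..<4} \<longrightarrow> a x \<in> {..n}) \<and> (x \<notin> {..<4} \<longrightarrow> a x = (0::nat))}"
  shows "finite A" "(n+1)^4 \<le> card A"
proof -
  show finA: "finite A" unfolding A_def by (rule finite_set_of_finite_funs) auto
  define f where "f = (\<lambda>(p::nat,q::nat,r::nat,s::nat). (\<lambda>x::nat. if x=0 then p else if x=1 then q else if x = 2 then r else if x = 3 then s else 0))"
  have inj: "inj_on f ({..n}\<times>{..n}\<times>{..n}\<times>{..n})"
  proof (rule inj_onI)
    fix X Y assume "X \<in> {..n}\<times>{..n}\<times>{..n}\<times>{..n}" "Y \<in> {..n}\<times>{..n}\<times>{..n}\<times>{..n}" "f X = f Y"
    obtain p q r s where X: "X = (p,q,r,s)" by (cases X) auto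
    obtain p' q' r' s' where Y: "Y = (p',q',r',s')" by (cases Y) auto
    have e: "\<And>x. f X x = f Y x" using \<open>f X = f Y\<close> by simp
    from e[of 0] e[of 1] e[of 2] e[of 3] show "X = Y" by (simp add: f_def X Y)
  qed
  have sub: "f ` ({..n}\<times>{..n}\<times>{..n}\<times>{..n}) \<subseteq> A"
    unfolding A_def f_def by (auto simp: less4)
  have "(n+1)^4 = card ({..n}\<times>{..n}\<times>{..n}\<times>{..n})"
    by (simp add: card_cartesian_product eval_nat_numeral)
  also have "\<dots> \<le> card A" using card_inj_on_le[OF inj sub finA] .
  finally show "(n+1)^4 \<le> card A" .
qed

lemma arith_bound:
  fixes e n :: nat
  assumes "n = 125 * (e+1)^3"
  shows "(4*n*e + 1)^3 < (n+1)^4"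
proof -
  have n1: "n \<ge> 1" using assms by simp
  have "(4*n*e + 1)^3 \<le> (4*n*(e+1))^3"
    using n1 by (intro power_mono) (auto simp: algebra_simps)
  also have "\<dots> = 4^3 * n^3 * (e+1)^3" by (simp only: power_mult_distrib)
  also have "\<dots> = 64 * n^3 * (e+1)^3" by simp
  also have "\<dots> < 125 * n^3 * (e+1)^3" using n1 by simp
  also have "\<dots> = n^3 * (125 * (e+1)^3)" by (simp add: algebra_simps)
  also have "\<dots> = n^3 * n" by (simp only: assms[symmetric])
  also have "\<dots> = n^4" by (simp add: eval_nat_numeral)
  also have "\<dots> < (n+1)^4" by (intro power_strict_mono) auto
  finally show ?thesis .
qed

lemma upper:
  assumes m: "m \<ge> 4" and h: "\<forall>i<m. h i \<in> gen_field 4 GG"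
  shows "\<not> alg_indep m h"
proof -
  have "\<forall>i. \<exists>PQ. i < 4 \<longrightarrow> (h i = (\<lambda>z. mpoly_eval 4 (fst PQ) (\<lambda>j. GG j z) / mpoly_eval 4 (snd PQ) (\<lambda>j. GG j z))
      \<and> is_mpoly 4 (fst PQ) \<and> is_mpoly 4 (snd PQ) \<and> (\<exists>z. mpoly_eval 4 (snd PQ) (\<lambda>j. GG j z) \<noteq> 0))"
  proof
    fix i
    show "\<exists>PQ. i < 4 \<longrightarrow> (h i = (\<lambda>z. mpoly_eval 4 (fst PQ) (\<lambda>j. GG j z) / mpoly_eval 4 (snd PQ) (\<lambda>j. GG j z))
      \<and> is_mpoly 4 (fst PQ) \<and> is_mpoly 4 (snd PQ) \<and> (\<exists>z. mpoly_eval 4 (snd PQ) (\<lambda>j. GG j z) \<noteq> 0))"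
    proof (cases "i < 4")
      case True
      then have "h i \<in> gen_field 4 GG" using h m by auto
      then obtain P Q where "h i = (\<lambda>z. mpoly_eval 4 P (\<lambda>j. GG j z) / mpoly_eval 4 Q (\<lambda>j. GG j z))"
        "is_mpoly 4 P" "is_mpoly 4 Q" "\<exists>z. mpoly_eval 4 Q (\<lambda>j. GG j z) \<noteq> 0"
        unfolding gen_field_def by blast
      then show ?thesis by (intro exI[of _ "(P,Q)"]) simp
    qed simp
  qed
  then obtain PQ where PQ: "\<forall>i. i < 4 \<longrightarrow> (h i = (\<lambda>z. mpoly_eval 4 (fst (PQ i)) (\<lambda>j. GG j z) / mpoly_eval 4 (snd (PQ i)) (\<lambda>j. GG j z))
      \<and> is_mpoly 4 (fst (PQ i)) \<and> is_mpoly 4 (snd (PQ i)) \<and> (\<exists>z. mpoly_eval 4 (snd (PQ i)) (\<lambda>j. GG j z) \<noteq> 0))"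
    by (rule choice[THEN exE]) blast
  define NP where "NP i = fst (PQ i)" for i
  define QP where "QP i = snd (PQ i)" for i
  have NQ: "\<And>i. i < 4 \<Longrightarrow> h i = (\<lambda>z. mpoly_eval 4 (NP i) (\<lambda>j. GG j z) / mpoly_eval 4 (QP i) (\<lambda>j. GG j z))
      \<and> is_mpoly 4 (NP i) \<and> is_mpoly 4 (QP i) \<and> (\<exists>z. mpoly_eval 4 (QP i) (\<lambda>j. GG j z) \<noteq> 0)"
    using PQ unfolding NP_def QP_def by blast
  define Nf where "Nf i = (\<lambda>z. mpoly_eval 4 (NP i) (\<lambda>j. GG j z))" for i
  define Df where "Df i = (\<lambda>z. mpoly_eval 4 (QP i) (\<lambda>j. GG j z))" for i
  have hq: "h i z = Nf i z / Df i z" if "i < 4" for i z using NQ[OF that] by (simp add: Nf_def Df_def)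
  define e where "e = (\<Sum>i<4. degP (NP i) + degP (QP i))"
  have Nf_Sd: "Nf i \<in> Sd e" and Df_Sd: "Df i \<in> Sd e" if i: "i < 4" for i
  proof -
    have le: "degP (NP i) + degP (QP i) \<le> e" unfolding e_def using i by (intro member_le_sum) auto
    have "Nf i \<in> Sd (degP (NP i))" unfolding Nf_def degP_def using NQ[OF i] GG_Sd by (intro mpoly_Sd) auto
    also have "\<dots> \<subseteq> Sd e" using le by (intro Sd_mono) auto
    finally show "Nf i \<in> Sd e" .
    have "Df i \<in> Sd (degP (QP i))" unfolding Df_def degP_def using NQ[OF i] GG_Sd by (intro mpoly_Sd) auto
    also have "\<dots> \<subseteq> Sd e" using le by (intro Sd_mono) auto
    finally show "Df i \<in> Sd e" .
  qed
  define n :: nat where "n = 125 * (e+1)^3"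
  define d where "d = 4*n*e"
  define A where "A = {a::nat\<Rightarrow>nat. \<forall>x. (x \<in> {..<4} \<longrightarrow> a x \<in> {..n}) \<and> (x \<notin> {..<4} \<longrightarrow> a x = (0::nat))}"
  have finA: "finite A" and cardA: "(n+1)^4 \<le> card A" unfolding A_def by (rule card_A_ge)+
  define B where "B = (\<lambda>(i,j,k). mono3 i j k) ` ({..d}\<times>{..d}\<times>{..d})"
  have finB: "finite B" unfolding B_def by simp
  have "card B \<le> card ({..d}\<times>{..d}\<times>{..d})" unfolding B_def by (rule card_image_le) simp
  also have "\<dots> = (d+1)^3" by (simp add: card_cartesian_product eval_nat_numeral)
  also have "\<dots> < (n+1)^4" unfolding d_def by (rule arith_bound[OF n_def])
  finally have cardB: "card B < card A" using cardA by linarith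
  have SdB: "Sd d = FV.span B" unfolding Sd_def B_def by (rule arg_cong[where f=FV.span]) (auto intro!: image_eqI[where x="(i,j,k)" for i j k])
  define \<Phi> where "\<Phi> a = (\<lambda>z. \<Prod>i<4. Nf i z ^ a i * Df i z ^ (n - a i))" for a
  have "\<Phi> ` A \<subseteq> FV.span B"
  proof
    fix f assume "f \<in> \<Phi> ` A"
    then obtain a where a: "a \<in> A" "f = \<Phi> a" by auto
    have "\<Phi> a \<in> Sd (\<Sum>i<4. a i * e + (n - a i) * e)"
      unfolding \<Phi>_def using Nf_Sd Df_Sd by (intro Sd_prod Sd_mult' Sd_power) auto
    also have "(\<Sum>i<4. a i * e + (n - a i) * e) = (\<Sum>i<(4::nat). n * e)"
    proof (intro sum.cong refl)
      fix i assume "i \<in> {..<(4::nat)}"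
      then have "a i \<le> n" using a by (auto simp: A_def)
      then show "a i * e + (n - a i) * e = n * e" by (simp add: add_mult_distrib[symmetric])
    qed
    also have "\<dots> = d" by (simp add: d_def)
    finally show "f \<in> FV.span B" using a SdB by simp
  qed
  from dep_lemma[OF finA finB cardB this]
  obtain c where c: "\<exists>a\<in>A. c a \<noteq> 0" "\<And>z. (\<Sum>a\<in>A. c a * \<Phi> a z) = 0" by blast
  define Pc where "Pc a = (if a \<in> A then c a else 0)" for a
  have suppA: "{a. Pc a \<noteq> 0} \<subseteq> A" by (auto simp: Pc_def split: if_splits)
  have mpPc: "is_mpoly m Pc"
    unfolding is_mpoly_def using finite_subset[OF suppA finA] suppA m by (auto simp: A_def)
  have nzPc: "\<exists>a. Pc a \<noteq> 0" using c(1) by (auto simp: Pc_def)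
  have zero: "mpoly_eval m Pc (\<lambda>i. h i z) = 0" if Dz: "\<forall>i<4. Df i z \<noteq> 0" for z
  proof -
    have prod_eq: "(\<Prod>i<m. h i z ^ a i) = (\<Prod>i<4. h i z ^ a i)" if "a \<in> A" for a
      using that m by (intro prod.mono_neutral_right) (auto simp: A_def)
    have "mpoly_eval m Pc (\<lambda>i. h i z) = (\<Sum>a\<in>A. Pc a * (\<Prod>i<m. h i z ^ a i))"
      unfolding mpoly_eval_def using suppA finA by (intro sum.mono_neutral_left) auto
    also have "\<dots> = (\<Sum>a\<in>A. c a * (\<Prod>i<4. h i z ^ a i))"
      using prod_eq by (intro sum.cong refl) (auto simp: Pc_def)
    finally have ev: "mpoly_eval m Pc (\<lambda>i. h i z) = (\<Sum>a\<in>A. c a * (\<Prod>i<4. h i z ^ a i))" .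
    define Dp where "Dp = (\<Prod>i<4. Df i z)"
    have Dp0: "Dp \<noteq> 0" using Dz by (simp add: Dp_def)
    have Phi_eq: "\<Phi> a z = Dp ^ n * (\<Prod>i<4. h i z ^ a i)" if a: "a \<in> A" for a
    proof -
      have "\<Phi> a z = (\<Prod>i<4. Df i z ^ n * h i z ^ a i)"
        unfolding \<Phi>_def
      proof (intro prod.cong refl)
        fix i assume i: "i \<in> {..<(4::nat)}"
        then have ai: "a i \<le> n" using a by (auto simp: A_def)
        have D: "Df i z \<noteq> 0" using Dz i by auto
        have "Df i z ^ n = Df i z ^ a i * Df i z ^ (n - a i)"
          using ai by (simp add: power_add[symmetric])
        then show "Nf i z ^ a i * Df i z ^ (n - a i) = Df i z ^ n * h i z ^ a i"
          using D i by (simp add: hq power_divide field_simps)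
      qed
      also have "\<dots> = Dp ^ n * (\<Prod>i<4. h i z ^ a i)"
        by (simp add: prod.distrib Dp_def prod_power_distrib)
      finally show ?thesis .
    qed
    have "0 = (\<Sum>a\<in>A. c a * \<Phi> a z)" using c(2) by simp
    also have "\<dots> = Dp ^ n * (\<Sum>a\<in>A. c a * (\<Prod>i<4. h i z ^ a i))"
      unfolding sum_distrib_left using Phi_eq by (intro sum.cong refl) auto
    finally show ?thesis using Dp0 ev by simp
  qed
  have "{z. mpoly_eval m Pc (\<lambda>i. h i z) \<noteq> 0} \<subseteq> (\<Union>i<4. {z. Df i z = 0})"
    using zero by blast
  moreover have "countable (\<Union>i<4. {z. Df i z = 0})"
  proof (intro countable_UN[OF countableI_type])
    fix i assume "i \<in> {..<(4::nat)}"
    then have i: "i < 4" by simp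
    obtain z0 where "Df i z0 \<noteq> 0" using NQ[OF i] by (auto simp: Df_def)
    moreover have "Df i holomorphic_on UNIV" unfolding Df_def by (intro mpoly_holo GG_holo)
    ultimately show "countable {z. Df i z = 0}" by (intro countable_zeros)
  qed
  ultimately have "countable {z. mpoly_eval m Pc (\<lambda>i. h i z) \<noteq> 0}" by (rule countable_subset)
  then show ?thesis unfolding alg_indep_def using mpPc nzPc by blast
qed


definition uv :: "nat \<Rightarrow> nat \<Rightarrow> nat" where "uv k = (\<lambda>j. if j = k then 1 else 0)"
definition zv :: "nat \<Rightarrow> nat" where "zv = (\<lambda>_. 0)"

lemma uv_ne: "k \<noteq> l \<Longrightarrow> uv k \<noteq> uv l"
proof
  assume "k \<noteq> l" "uv k = uv l"
  then have "uv k k = uv l k" by simp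
  with \<open>k \<noteq> l\<close> show False by (simp add: uv_def)
qed

lemma uv_zv: "uv k \<noteq> zv"
proof
  assume "uv k = zv"
  then have "uv k k = zv k" by simp
  then show False by (simp add: uv_def zv_def)
qed

lemma zv_uv: "zv \<noteq> uv k" using uv_zv[of k] by metis

lemma prod_uv: "k < n \<Longrightarrow> (\<Prod>j<n. (x j :: complex) ^ uv k j) = x k"
proof -
  assume k: "k < n"
  have "(\<Prod>j<n. x j ^ uv k j) = (\<Prod>j<n. if j = k then x j else 1)"
    by (intro prod.cong refl) (simp add: uv_def)
  also have "\<dots> = x k" using k by (simp add: prod.delta)
  finally show ?thesis .
qed

lemma prod_zv: "(\<Prod>j<n. (x j :: complex) ^ zv j) = 1"
  by (simp add: zv_def)

lemma uv_big: "k < 4 \<Longrightarrow> i \<ge> 4 \<Longrightarrow> uv k i = 0" by (simp add: uv_def)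

definition Pz :: "(nat \<Rightarrow> nat) \<Rightarrow> complex" where
  "Pz a = (if a = uv 0 then 1 else if a = uv 1 then -1 else if a = zv then 1 else 0)"
definition Pe :: "(nat \<Rightarrow> nat) \<Rightarrow> complex" where
  "Pe a = (if a = uv 1 then 1 else if a = zv then -1 else 0)"
definition Pw :: "(nat \<Rightarrow> nat) \<Rightarrow> complex" where
  "Pw a = (if a = uv 3 then exp (-1) else 0)"
definition one4 :: "(nat \<Rightarrow> nat) \<Rightarrow> complex" where
  "one4 a = (if a = zv then 1 else 0)"

lemma supp_Pz: "{a. Pz a \<noteq> 0} = {uv 0, uv 1, zv}"
  using uv_ne[of 0 1] uv_ne[of 1 0] uv_zv zv_uv by (auto simp: Pz_def)
lemma supp_Pe: "{a. Pe a \<noteq> 0} = {uv 1, zv}"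
  using uv_zv zv_uv by (auto simp: Pe_def)
lemma supp_Pw: "{a. Pw a \<noteq> 0} = {uv 3}"
  by (auto simp: Pw_def)
lemma supp_one4: "{a. one4 a \<noteq> 0} = {zv}"
  by (auto simp: one4_def)

lemma mp_Pz: "is_mpoly 4 Pz" unfolding is_mpoly_def supp_Pz by (auto simp: Pz_def uv_def zv_def)
lemma mp_Pe: "is_mpoly 4 Pe" unfolding is_mpoly_def supp_Pe by (auto simp: Pe_def uv_def zv_def)
lemma mp_Pw: "is_mpoly 4 Pw" unfolding is_mpoly_def supp_Pw by (auto simp: Pw_def uv_def zv_def)
lemma mp_one4: "is_mpoly 4 one4" unfolding is_mpoly_def supp_one4 by (auto simp: one4_def zv_def)

lemma ev_Pz: "mpoly_eval 4 Pz x = x 0 - x 1 + 1"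
  unfolding mpoly_eval_def supp_Pz using uv_ne[of 0 1] uv_ne[of 1 0] uv_zv zv_uv
  by (simp add: prod_uv prod_zv Pz_def)
lemma ev_Pe: "mpoly_eval 4 Pe x = x 1 - 1"
  unfolding mpoly_eval_def supp_Pe using uv_zv zv_uv
  by (simp add: prod_uv prod_zv Pe_def)
lemma ev_Pw: "mpoly_eval 4 Pw x = exp (-1) * x 3"
  unfolding mpoly_eval_def supp_Pw
  by (simp add: prod_uv Pw_def)
lemma ev_one4: "mpoly_eval 4 one4 x = 1"
  unfolding mpoly_eval_def supp_one4
  by (simp add: prod_zv one4_def)

lemma GG_vals: "GG 0 z = exp z + z" "GG 1 z = exp z + 1" "GG 3 z = exp (exp z + 1)"
  "GG (Suc 0) z = exp z + 1" "GG (Suc (Suc (Suc 0))) z = exp (exp z + 1)"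
  by (simp_all add: GG_def eval_nat_numeral)

definition hL :: "nat \<Rightarrow> complex \<Rightarrow> complex" where
  "hL i = (\<lambda>z. mpoly_eval 4 ([Pz, Pe, Pw] ! i) (\<lambda>j. GG j z) / mpoly_eval 4 one4 (\<lambda>j. GG j z))"

lemma hL_vals: "i < 3 \<Longrightarrow> hL i z = [z, exp z, exp (exp z)] ! i"
proof -
  assume "i < 3"
  then have "i = 0 \<or> i = 1 \<or> i = 2" by auto
  then show ?thesis
    by (elim disjE) (simp_all add: hL_def ev_Pz ev_Pe ev_Pw ev_one4 GG_vals exp_add[symmetric])
qed

lemma mpoly_eval_cong: "(\<And>i. i < n \<Longrightarrow> x i = y i) \<Longrightarrow> mpoly_eval n P x = mpoly_eval n P y"
  unfolding mpoly_eval_def by (intro sum.cong refl arg_cong2[where f="(*)"] prod.cong) auto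

lemma lower: "\<exists>h. (\<forall>i<3. h i \<in> gen_field 4 GG) \<and> alg_indep 3 h"
proof (intro exI conjI allI impI)
  fix i :: nat assume "i < 3"
  then have "is_mpoly 4 ([Pz, Pe, Pw] ! i)"
    using mp_Pz mp_Pe mp_Pw by (auto simp: less_Suc_eq eval_nat_numeral)
  then show "hL i \<in> gen_field 4 GG"
    unfolding gen_field_def hL_def using mp_one4
    by (intro CollectI exI[of _ "[Pz,Pe,Pw]!i"] exI[of _ one4] conjI refl) (auto simp: ev_one4)
next
  show "alg_indep 3 hL"
    unfolding alg_indep_def
  proof (intro allI impI, elim conjE)
    fix P assume P: "is_mpoly 3 P" "\<exists>a. P a \<noteq> 0"
    obtain T where T: "\<And>t. t \<ge> T \<Longrightarrow> mpoly_eval 3 P (\<lambda>i. [complex_of_real t, exp (of_real t), exp (exp (of_real t))] ! i) \<noteq> 0"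
      using lower_key[OF P] by blast
    have sub: "complex_of_real ` {T<..<T+1} \<subseteq> {z. mpoly_eval 3 P (\<lambda>i. hL i z) \<noteq> 0}"
    proof
      fix w assume "w \<in> complex_of_real ` {T<..<T+1}"
      then obtain t where t: "t > T" "w = of_real t" by auto
      have "mpoly_eval 3 P (\<lambda>i. hL i w) = mpoly_eval 3 P (\<lambda>i. [complex_of_real t, exp (of_real t), exp (exp (of_real t))] ! i)"
        by (intro mpoly_eval_cong) (simp add: hL_vals t(2))
      then show "w \<in> {z. mpoly_eval 3 P (\<lambda>i. hL i z) \<noteq> 0}" using T[of t] t by simp
    qed
    show "uncountable {z. mpoly_eval 3 P (\<lambda>i. hL i z) \<noteq> 0}"
    proof
      assume "countable {z. mpoly_eval 3 P (\<lambda>i. hL i z) \<noteq> 0}"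
      then have "countable (complex_of_real ` {T<..<T+1})" using sub countable_subset by blast
      then have "countable {T<..<T+1}"
        by (rule countable_image_inj_on) (auto simp: inj_on_def)
      then show False using uncountable_open_interval[of T "T+1"] by simp
    qed
  qed
qed

theorem mainTheorem12:
  fixes f1 f2 F :: "complex \<Rightarrow> complex"
  assumes "f1 = (\<lambda>z. exp z + z)" and "f2 = (\<lambda>z. exp z + 1)" and "F = exp"
  shows "trdeg 4 (\<lambda>i. [f1, f2, F \<circ> f1, F \<circ> f2] ! i) = 3"
proof -
  have g: "(\<lambda>i. [f1, f2, F \<circ> f1, F \<circ> f2] ! i) = GG" using assms by (simp add: GG_def)
  show ?thesis unfolding g trdeg_def
  proof (rule cSup_eq_maximum)
    show "3 \<in> {m. \<exists>h. (\<forall>i<m. h i \<in> gen_field 4 GG) \<and> alg_indep m h}" using lower by simp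
    show "x \<le> 3" if xM: "x \<in> {m. \<exists>h. (\<forall>i<m. h i \<in> gen_field 4 GG) \<and> alg_indep m h}" for x
    proof -
      obtain h where "\<forall>i<x. h i \<in> gen_field 4 GG" "alg_indep x h" using xM by auto
      then show "x \<le> 3" using upper[of x h] by (cases "x \<ge> 4") auto
    qed
  qed
qed


end
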